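(* For all integers $n\geq 1$ and $k\geq 1$, $$B_k^e(n)=C_k^e(n+1)\qquad\text{and}\qquad B_k^o(n)=C_k^o(n+1).$$
   Context: All partitions are of positive integers into positive parts unless stated otherwise. $B_k^e(n)$ (resp. $B_k^o(n)$) is the number of partitions of $n$ having at least one odd part, with largest odd part $2\ell-1$, in which every part is odd except for at most $k-1$ even parts. These even parts are pairwise distinct, lie in the interval $[2\ell+2,\,2\ell+2k-2]$, and their number is even (resp. odd). $C_k^e(n)$ (resp. $C_k^o(n)$) is the number of pairs $(\lambda,\ell)$ with $\ell\geq1$ and $\lambda$ a partition of $n$ satisfying three conditions: - $\lambda$ contains the part $2\ell$; - the parts of $\lambda$ not exceeding $\ell$ are pairwise distinct, while parts in $(\ell,2\ell]$ are unrestricted; - the parts of $\lambda$ larger than $2\ell$ are at most $k-1$ pairwise distinct even parts lying in $[2\ell+2,\,2\ell+2k-2]$, and their number is even (resp. odd). Equivalently, $\sum_{n}\big(\sum_m C_{k,m}(n)x^m\big)q^n=\sum_{\ell\ge1}\frac{(-q;q)_\ell(-xq^{2\ell+2};q^2)_{k-1}}{(q^{\ell+1};q)_\ell}q^{2\ell}$, where $C_{k,m}(n)$ counts those pairs with exactly $m$ parts larger than $2\ell$. Then $C_k^e$ and $C_k^o$ collect even and odd $m$ respectively. Here $(a;q)_N=\prod_{i=0}^{N-1}(1-aq^i)$. *)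

theory Defs
  imports Main "HOL-Library.Multiset"
begin

definition partitions :: "nat \<Rightarrow> nat multiset set" where
  "partitions n = {m. (\<forall>x\<in>#m. 0 < x) \<and> sum_mset m = n}"

text \<open>Parameter r selects the parity of the number of even parts (0: even, 1: odd).
  The largest odd part is 2l-1, i.e. l = (largest odd part + 1) div 2.\<close>
definition B_set :: "nat \<Rightarrow> nat \<Rightarrow> nat \<Rightarrow> nat multiset set" where
  "B_set k r n = {m \<in> partitions n.
     (\<exists>x\<in>#m. odd x) \<and>
     (let l = (Max {x \<in> set_mset m. odd x} + 1) div 2 in
        (\<forall>y\<in>#m. even y \<longrightarrow>
            count m y = 1 \<and> 2*l + 2 \<le> y \<and> y \<le> 2*l + 2*k - 2)) \<and>
     size (filter_mset even m) \<le> k - 1 \<and>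
     size (filter_mset even m) mod 2 = r}"

definition B_e :: "nat \<Rightarrow> nat \<Rightarrow> nat" where
  "B_e k n = card (B_set k 0 n)"

definition B_o :: "nat \<Rightarrow> nat \<Rightarrow> nat" where
  "B_o k n = card (B_set k 1 n)"

definition C_set :: "nat \<Rightarrow> nat \<Rightarrow> nat \<Rightarrow> (nat multiset \<times> nat) set" where
  "C_set k r n = {(m, l). 1 \<le> l \<and> m \<in> partitions n \<and>
     2*l \<in># m \<and>
     (\<forall>y\<in>#m. y \<le> l \<longrightarrow> count m y = 1) \<and>
     (\<forall>y\<in>#m. 2*l < y \<longrightarrow>
         even y \<and> count m y = 1 \<and> 2*l + 2 \<le> y \<and> y \<le> 2*l + 2*k - 2) \<and>
     size (filter_mset (\<lambda>y. 2*l < y) m) \<le> k - 1 \<and>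
     size (filter_mset (\<lambda>y. 2*l < y) m) mod 2 = r}"

definition C_e :: "nat \<Rightarrow> nat \<Rightarrow> nat" where
  "C_e k n = card (C_set k 0 n)"

definition C_o :: "nat \<Rightarrow> nat \<Rightarrow> nat" where
  "C_o k n = card (C_set k 1 n)"

end

theory Submission
  imports Defs "HOL-Computational_Algebra.Formal_Power_Series"
begin

unbundle fps_syntax



definition G :: "nat \<Rightarrow> nat fps" where
  "G p = Abs_fps (\<lambda>i. if p dvd i then 1 else 0)"

lemma dvd2p: "0 < p \<Longrightarrow> (2*p dvd p*q) = even (q::nat)"
  using nat_mult_dvd_cancel1[of p 2 q] by (simp add: mult.commute)

lemma G_step:
  assumes "0 < p"
  shows "(1 + fps_X ^ p) * G (2*p) = G p"
proof (rule fps_ext)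
  fix n
  have "((1 + fps_X ^ p) * G (2*p)) $ n = G (2*p) $ n + (fps_X ^ p * G (2*p)) $ n"
    by (simp add: distrib_right)
  also have "\<dots> = (if 2*p dvd n then 1 else 0) + (if n < p then 0 else (if 2*p dvd (n-p) then 1 else 0))"
    by (simp add: fps_X_power_mult_nth G_def)
  also have "\<dots> = (if p dvd n then 1 else 0)"
  proof (cases "p dvd n")
    case True
    then obtain q where q: "n = p*q" by blast
    show ?thesis
    proof (cases q)
      case 0
      then have "n = 0" using q by simp
      then show ?thesis using assms by simp
    next
      case (Suc q')
      have np: "\<not> n < p" using q Suc by simp
      have nq: "n - p = p*q'" using q Suc by simp
      have "(2*p dvd n) = even q" using q dvd2p[OF assms] by simp
      moreover have "(2*p dvd (n-p)) = even q'" using nq dvd2p[OF assms] by simp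
      ultimately show ?thesis using Suc np True by auto
    qed
  next
    case False
    then have "\<not> 2*p dvd n" by (meson dvd_mult_right)
    moreover have "\<not> (\<not> n < p \<and> 2*p dvd (n-p))"
    proof
      assume h: "\<not> n < p \<and> 2*p dvd (n-p)"
      then have "p dvd (n - p)" by (meson dvd_mult_right)
      then have "p dvd (n - p + p)" by simp
      moreover have "n - p + p = n" using h by simp
      ultimately show False using False by simp
    qed
    ultimately show ?thesis using False by auto
  qed
  also have "\<dots> = G p $ n" by (simp add: G_def)
  finally show "((1 + fps_X ^ p) * G (2*p)) $ n = G p $ n" .
qed

definition L :: "nat \<Rightarrow> nat fps" where
  "L l = (\<Prod>x\<in>{x. odd x \<and> x < 2*l}. G x)"
definition R :: "nat \<Rightarrow> nat fps" where
  "R l = (\<Prod>x\<in>{1..l}. 1 + fps_X ^ x) * (\<Prod>x\<in>{l<..2*l}. G x)"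

lemma L_eq_R: "L l = R l"
proof (induction l)
  case 0
  then show ?case by (simp add: L_def R_def)
next
  case (Suc l)
  have s1: "{x. odd x \<and> x < 2*Suc l} = insert (2*l+1) {x. odd x \<and> x < 2*l}"
    by auto presburger
  have "L (Suc l) = G (2*l+1) * L l"
    unfolding L_def s1 by (subst prod.insert) auto
  also have "\<dots> = G (2*l+1) * R l" using Suc by simp
  also have "\<dots> = R (Suc l)"
  proof -
    have c: "{1..Suc l} = insert (Suc l) {1..l}" by auto
    show ?thesis
    proof (cases "l = 0")
      case True
      have e: "{Suc 0<..2::nat} = {2}" by auto
      have "R 1 = (1 + fps_X) * G 2" unfolding R_def by (simp add: e)
      moreover have "R 0 = 1" by (simp add: R_def)
      ultimately show ?thesis using True G_step[of 1] by simp
    next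
      case False
      have b: "{Suc l<..2*Suc l} = insert (2*l+2) (insert (2*l+1) {Suc l<..2*l})" using False by auto
      have a: "{l<..2*l} = insert (Suc l) {Suc l<..2*l}" using False by auto
      define P1 where "P1 = (\<Prod>x\<in>{1..l}. 1 + fps_X ^ x :: nat fps)"
      define P2 where "P2 = (\<Prod>x\<in>{Suc l<..2*l}. G x)"
      have h1: "R l = P1 * (G (Suc l) * P2)"
        unfolding R_def a P1_def P2_def by (subst prod.insert) auto
      have h2: "R (Suc l) = (P1 * (1 + fps_X^(Suc l))) * (G (2*l+2) * (G (2*l+1) * P2))"
        unfolding R_def b c P1_def P2_def by (subst prod.insert, simp, simp, subst prod.insert, simp, simp,
            subst prod.insert, simp, simp, simp add: mult.commute)
      have h3: "(1 + fps_X^(Suc l)) * G (2*l+2) = G (Suc l)"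
        using G_step[of "Suc l"] by simp
      have "R (Suc l) = (P1 * P2 * G (2*l+1)) * ((1 + fps_X^(Suc l)) * G (2*l+2))"
        unfolding h2 by (simp only: mult_ac)
      also have "\<dots> = (P1 * P2 * G (2*l+1)) * G (Suc l)" by (simp only: h3)
      also have "\<dots> = G (2*l+1) * R l" unfolding h1 by (simp only: mult_ac)
      finally show ?thesis by simp
    qed
  qed
  finally show ?case .
qed



definition MS :: "nat set \<Rightarrow> (nat \<Rightarrow> nat set) \<Rightarrow> nat \<Rightarrow> nat multiset set" where
  "MS P A n = {m. set_mset m \<subseteq> P \<and> (\<forall>p\<in>P. count m p \<in> A p) \<and> sum_mset m = n}"

definition gf :: "nat \<Rightarrow> nat set \<Rightarrow> nat fps" where
  "gf p A = Abs_fps (\<lambda>i. if p dvd i \<and> i div p \<in> A then 1 else 0)"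

lemma MS_empty: "MS {} A n = (if n = 0 then {{#}} else {})"
  by (auto simp: MS_def)

lemma sum_reindex_aux:
  assumes "0 < p"
  shows "(\<Sum>i=0..n. gf p B $ i * F $ (n - i)) = (\<Sum>j\<in>{j. p*j \<le> n \<and> j \<in> B}. F $ (n - p*j))"
proof -
  have "(\<Sum>i=0..n. gf p B $ i * F $ (n - i)) = (\<Sum>i=0..n. if p dvd i \<and> i div p \<in> B then F $ (n - i) else 0)"
    by (rule sum.cong) (simp_all add: gf_def)
  also have "\<dots> = (\<Sum>i\<in>{i\<in>{0..n}. p dvd i \<and> i div p \<in> B}. F $ (n - i))"
    by (rule sum.inter_filter[symmetric]) simp
  also have "\<dots> = (\<Sum>j\<in>{j. p*j \<le> n \<and> j \<in> B}. F $ (n - p*j))"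
  proof (rule sum.reindex_bij_witness[where i="\<lambda>j. p*j" and j="\<lambda>i. i div p"])
  qed (use assms in auto)
  finally show ?thesis .
qed

lemma MS_count:
  assumes "finite P" "0 \<notin> P"
  shows "finite (MS P A n) \<and> card (MS P A n) = (\<Prod>p\<in>P. gf p (A p)) $ n"
  using assms
proof (induction P arbitrary: n rule: finite_induct)
  case empty
  then show ?case by (simp add: MS_empty)
next
  case (insert p P)
  have p0: "0 < p" using insert.prems by auto
  have P0: "0 \<notin> P" using insert.prems by auto
  define J where "J = {j. p*j \<le> n \<and> j \<in> A p}"
  have fJ: "finite J"
  proof -
    have "J \<subseteq> {..n}"
    proof
      fix j assume "j \<in> J"
      then have "p*j \<le> n" by (simp add: J_def)
      moreover have "j \<le> p*j" using p0 by (cases p) auto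
      ultimately have "j \<le> n" by (meson le_trans)
      then show "j \<in> {..n}" by simp
    qed
    then show ?thesis by (rule finite_subset) simp
  qed
  define f where "f = (\<lambda>(j, m). m + replicate_mset j p)"
  have bij: "bij_betw f (SIGMA j:J. MS P A (n - p*j)) (MS (insert p P) A n)"
  proof (rule bij_betw_byWitness[where f'="\<lambda>m. (count m p, m - replicate_mset (count m p) p)"])
    show "\<forall>a\<in>(SIGMA j:J. MS P A (n - p*j)). (count (f a) p, f a - replicate_mset (count (f a) p) p) = a"
    proof
      fix a assume a: "a \<in> (SIGMA j:J. MS P A (n - p*j))"
      obtain j m where am: "a = (j, m)" by fastforce
      have "p \<notin># m" using a am insert.hyps by (auto simp: MS_def)
      then have "count m p = 0" by (simp add: not_in_iff)
      then show "(count (f a) p, f a - replicate_mset (count (f a) p) p) = a"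
        by (simp add: am f_def)
    qed
    show "\<forall>a'\<in>MS (insert p P) A n. f (count a' p, a' - replicate_mset (count a' p) p) = a'"
    proof
      fix m assume "m \<in> MS (insert p P) A n"
      have "replicate_mset (count m p) p \<subseteq># m"
        using count_le_replicate_mset_subset_eq[of "count m p" m p] by simp
      then show "f (count m p, m - replicate_mset (count m p) p) = m"
        by (simp add: f_def subset_mset.diff_add)
    qed
    show "f ` (SIGMA j:J. MS P A (n - p*j)) \<subseteq> MS (insert p P) A n"
    proof
      fix x assume "x \<in> f ` (SIGMA j:J. MS P A (n - p*j))"
      then obtain j m where j: "j \<in> J" and m: "m \<in> MS P A (n - p*j)" and x: "x = m + replicate_mset j p"
        by (auto simp: f_def)
      have pm: "count m p = 0" using m insert.hyps by (auto simp: MS_def not_in_iff[symmetric])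
      have "sum_mset x = n" using m j by (auto simp: x MS_def J_def)
      moreover have "set_mset x \<subseteq> insert p P" using m by (auto simp: x MS_def)
      moreover have "\<forall>q\<in>insert p P. count x q \<in> A q"
        using m j pm insert.hyps by (auto simp: x MS_def J_def)
      ultimately show "x \<in> MS (insert p P) A n" by (simp add: MS_def)
    qed
    show "(\<lambda>m. (count m p, m - replicate_mset (count m p) p)) ` MS (insert p P) A n \<subseteq> (SIGMA j:J. MS P A (n - p*j))"
    proof
      fix y assume "y \<in> (\<lambda>m. (count m p, m - replicate_mset (count m p) p)) ` MS (insert p P) A n"
      then obtain m where m: "m \<in> MS (insert p P) A n" and y: "y = (count m p, m - replicate_mset (count m p) p)"
        by auto
      define m0 where "m0 = m - replicate_mset (count m p) p"
      have sub: "replicate_mset (count m p) p \<subseteq># m"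
        using count_le_replicate_mset_subset_eq[of "count m p" m p] by simp
      then have mm: "m = m0 + replicate_mset (count m p) p" by (simp add: m0_def subset_mset.diff_add)
      have c0: "count m0 q = (if q = p then 0 else count m q)" for q
        by (simp add: m0_def)
      have "sum_mset m = sum_mset m0 + p * count m p"
        by (subst mm) simp
      then have s: "sum_mset m0 = n - p * count m p" "p * count m p \<le> n" using m by (auto simp: MS_def)
      have "set_mset m0 \<subseteq> P"
      proof
        fix x assume "x \<in># m0"
        then have "count m0 x > 0" by simp
        then have "x \<noteq> p" "count m x > 0" using c0[of x] by (auto split: if_splits)
        then show "x \<in> P" using m by (auto simp: MS_def)
      qed
      moreover have "\<forall>q\<in>P. count m0 q \<in> A q" using m c0 insert.hyps by (auto simp: MS_def)
      ultimately have "m0 \<in> MS P A (n - p * count m p)" using s by (simp add: MS_def)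
      moreover have "count m p \<in> J" using m s by (auto simp: J_def MS_def)
      ultimately show "y \<in> (SIGMA j:J. MS P A (n - p*j))" using y m0_def by auto
    qed
  qed
  have fin: "finite (SIGMA j:J. MS P A (n - p*j))"
    using fJ insert.IH[OF P0] by auto
  have "card (MS (insert p P) A n) = card (SIGMA j:J. MS P A (n - p*j))"
    using bij by (simp add: bij_betw_same_card)
  also have "\<dots> = (\<Sum>j\<in>J. card (MS P A (n - p*j)))"
    using fJ insert.IH[OF P0] by (simp add: card_SigmaI)
  also have "\<dots> = (\<Sum>j\<in>J. (\<Prod>p\<in>P. gf p (A p)) $ (n - p*j))"
    using insert.IH[OF P0] by simp
  also have "\<dots> = (gf p (A p) * (\<Prod>p\<in>P. gf p (A p))) $ n"
    by (simp add: fps_mult_nth sum_reindex_aux[OF p0] J_def)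
  also have "\<dots> = (\<Prod>p\<in>insert p P. gf p (A p)) $ n"
    using insert.hyps by simp
  finally show ?case using bij fin bij_betw_finite by blast
qed



definition Oset :: "nat \<Rightarrow> nat multiset set" where
  "Oset l = {m. (\<forall>x\<in>#m. odd x \<and> x < 2*l) \<and> 2*l - 1 \<in># m}"
definition Dset :: "nat \<Rightarrow> nat multiset set" where
  "Dset l = {m. (\<forall>x\<in>#m. 0 < x \<and> x \<le> 2*l) \<and> 2*l \<in># m \<and> (\<forall>y\<in>#m. y \<le> l \<longrightarrow> count m y = 1)}"

definition pos_set :: "nat set" where "pos_set = {k. 1 \<le> k}"
definition bin_set :: "nat set" where "bin_set = {0,1}"

lemma pos_set_iff[simp]: "k \<in> pos_set \<longleftrightarrow> 1 \<le> k" by (simp add: pos_set_def)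
lemma bin_set_iff[simp]: "k \<in> bin_set \<longleftrightarrow> k \<le> 1" by (auto simp: bin_set_def)

definition AO :: "nat \<Rightarrow> nat \<Rightarrow> nat set" where
  "AO l x = (if x = 2*l - 1 then pos_set else UNIV)"
definition AD :: "nat \<Rightarrow> nat \<Rightarrow> nat set" where
  "AD l x = (if x \<le> l then bin_set else if x = 2*l then pos_set else UNIV)"

lemma Oset_MS:
  assumes "1 \<le> l"
  shows "{m \<in> Oset l. sum_mset m = N} = MS {x. odd x \<and> x < 2*l} (AO l) N"
proof (intro set_eqI iffI)
  fix m assume m: "m \<in> {m \<in> Oset l. sum_mset m = N}"
  then have "count m (2*l-1) \<ge> 1" by (simp add: Oset_def)
  with m show "m \<in> MS {x. odd x \<and> x < 2*l} (AO l) N"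
    by (auto simp: MS_def Oset_def AO_def)
next
  fix m assume m: "m \<in> MS {x. odd x \<and> x < 2*l} (AO l) N"
  have "odd (2*l-1) \<and> 2*l - 1 < 2*l" using assms by auto
  then have "2*l-1 \<in> {x. odd x \<and> x < 2*l}" by blast
  then have "count m (2*l-1) \<in> AO l (2*l-1)" using m by (simp add: MS_def)
  then have "count m (2*l-1) \<ge> 1" by (simp add: AO_def)
  then have "2*l-1 \<in># m" by (simp add: count_eq_zero_iff[symmetric])
  with m show "m \<in> {m \<in> Oset l. sum_mset m = N}"
    by (auto simp: MS_def Oset_def)
qed

lemma Dset_MS:
  assumes "1 \<le> l"
  shows "{m \<in> Dset l. sum_mset m = N} = MS {1..2*l} (AD l) N"
proof (intro set_eqI iffI)
  fix m assume m: "m \<in> {m \<in> Dset l. sum_mset m = N}"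
  then have c: "count m (2*l) \<ge> 1" by (simp add: Dset_def)
  have "count m x \<in> AD l x" if "x \<in> {1..2*l}" for x
  proof (cases "x \<le> l")
    case True
    then show ?thesis using m by (cases "x \<in># m") (auto simp: AD_def Dset_def not_in_iff)
  next
    case False
    then show ?thesis using c by (auto simp: AD_def)
  qed
  with m show "m \<in> MS {1..2*l} (AD l) N"
    by (auto simp: MS_def Dset_def Suc_le_eq)
next
  fix m assume m: "m \<in> MS {1..2*l} (AD l) N"
  have "2*l \<in> {1..2*l}" "\<not> 2*l \<le> l" using assms by auto
  then have "count m (2*l) \<in> AD l (2*l)" using m by (simp add: MS_def)
  then have "count m (2*l) \<ge> 1" using \<open>\<not> 2*l \<le> l\<close> by (simp add: AD_def)
  then have a: "2*l \<in># m" by (simp add: count_eq_zero_iff[symmetric])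
  have b: "count m y = 1" if "y \<in># m" "y \<le> l" for y
  proof -
    have "y \<in> {1..2*l}" using m that by (auto simp: MS_def)
    then have "count m y \<in> AD l y" using m by (simp add: MS_def)
    then have "count m y \<le> 1" using that by (simp add: AD_def)
    moreover have "count m y \<noteq> 0" using that by simp
    ultimately show ?thesis by linarith
  qed
  from m a b show "m \<in> {m \<in> Dset l. sum_mset m = N}"
    by (force simp: MS_def Dset_def)
qed

lemma gf_UNIV: "gf p UNIV = G p"
  by (simp add: gf_def G_def)

lemma gf_01: assumes "0 < p" shows "gf p bin_set = 1 + fps_X ^ p"
proof (rule fps_ext)
  fix i
  have "(p dvd i \<and> i div p \<in> bin_set) = (i = 0 \<or> i = p)"
  proof
    assume h: "p dvd i \<and> i div p \<in> bin_set"
    then obtain q where "i = p*q" by blast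
    then show "i = 0 \<or> i = p" using h assms by auto
  qed (use assms in auto)
  then show "gf p bin_set $ i = (1 + fps_X ^ p) $ i"
    using assms by (auto simp: gf_def)
qed

lemma gf_ge1: assumes "0 < p" shows "gf p pos_set = fps_X ^ p * G p"
proof (rule fps_ext)
  fix i
  show "gf p pos_set $ i = (fps_X ^ p * G p) $ i"
  proof (cases "i < p")
    case True
    then have "\<not> (p dvd i \<and> 1 \<le> i div p)" using assms
      by (metis div_less not_one_le_zero)
    then show ?thesis using True by (simp add: gf_def fps_X_power_mult_nth)
  next
    case False
    have "(p dvd i \<and> 1 \<le> i div p) = (p dvd (i - p))"
    proof
      assume "p dvd i \<and> 1 \<le> i div p"
      then show "p dvd (i - p)" by (simp add: dvd_diff_nat)
    next
      assume "p dvd (i - p)"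
      then have "p dvd (i - p + p)" by simp
      then have "p dvd i" using False by simp
      moreover have "1 \<le> i div p" using False assms
        by (simp add: div_greater_zero_iff Suc_le_eq)
      ultimately show "p dvd i \<and> 1 \<le> i div p" by simp
    qed
    then show ?thesis using False by (simp add: gf_def G_def fps_X_power_mult_nth)
  qed
qed

lemma prod_O:
  assumes "1 \<le> l"
  shows "(\<Prod>p\<in>{x. odd x \<and> x < 2*l}. gf p (AO l p)) = fps_X ^ (2*l-1) * L l"
proof -
  have fin: "finite {x::nat. odd x \<and> x < 2*l}" by simp
  have "(\<Prod>p\<in>{x. odd x \<and> x < 2*l}. gf p (AO l p)) =
        (\<Prod>p\<in>{x. odd x \<and> x < 2*l}. (if p = 2*l-1 then fps_X ^ p else 1) * G p)"
  proof (rule prod.cong)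
    fix p assume "p \<in> {x. odd x \<and> x < 2*l}"
    then have "0 < p" by (cases p) auto
    then show "gf p (AO l p) = (if p = 2*l-1 then fps_X ^ p else 1) * G p"
      by (simp add: AO_def gf_ge1 gf_UNIV)
  qed simp
  also have "\<dots> = (\<Prod>p\<in>{x. odd x \<and> x < 2*l}. (if p = 2*l-1 then fps_X ^ p else 1)) * L l"
    by (simp add: prod.distrib L_def)
  also have "\<dots> = fps_X ^ (2*l-1) * L l"
    using assms fin by (subst prod.delta) auto
  finally show ?thesis .
qed

lemma prod_D:
  assumes "1 \<le> l"
  shows "(\<Prod>p\<in>{1..2*l}. gf p (AD l p)) = fps_X ^ (2*l) * R l"
proof -
  have "(\<Prod>p\<in>{1..2*l}. gf p (AD l p)) =
        (\<Prod>p\<in>{1..2*l}. (if p \<le> l then 1 + fps_X ^ p else G p) * (if p = 2*l then fps_X ^ p else 1))"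
  proof (rule prod.cong)
    fix p assume p: "p \<in> {1..2*l}"
    then have "0 < p" by auto
    then show "gf p (AD l p) = (if p \<le> l then 1 + fps_X ^ p else G p) * (if p = 2*l then fps_X ^ p else 1)"
      using assms by (auto simp: AD_def gf_ge1 gf_UNIV gf_01 mult.commute)
  qed simp
  also have "\<dots> = (\<Prod>p\<in>{1..2*l}. (if p \<le> l then 1 + fps_X ^ p else G p)) * fps_X ^ (2*l)"
    using assms by (simp add: prod.distrib)
  also have "(\<Prod>p\<in>{1..2*l}. (if p \<le> l then 1 + fps_X ^ p else G p)) = R l"
  proof -
    have e1: "{1..2*l} \<inter> {x. x \<le> l} = {1..l}" by auto
    have e2: "{1..2*l} \<inter> - {x. x \<le> l} = {l<..2*l}" using assms by auto
    show ?thesis unfolding prod.If_cases[OF finite_atLeastAtMost] e1 e2 R_def by (rule refl)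
  qed
  finally show ?thesis by (simp add: mult.commute)
qed

lemma card_core:
  assumes "1 \<le> l"
  shows "finite {m \<in> Oset l. sum_mset m = N} \<and> finite {m \<in> Dset l. sum_mset m = N + 1} \<and>
         card {m \<in> Oset l. sum_mset m = N} = card {m \<in> Dset l. sum_mset m = N + 1}"
proof -
  have f1: "finite {x::nat. odd x \<and> x < 2*l}" "0 \<notin> {x::nat. odd x \<and> x < 2*l}" by auto
  have f2: "finite {1..2*l}" "0 \<notin> {1..2*l}" by auto
  note A = MS_count[OF f1, of "AO l" N] and B = MS_count[OF f2, of "AD l" "N+1"]
  note A' = A[unfolded prod_O[OF assms] Oset_MS[OF assms, symmetric]]
  note B' = B[unfolded prod_D[OF assms] Dset_MS[OF assms, symmetric]]
  have "card {m \<in> Oset l. sum_mset m = N} = (fps_X ^ (2*l-1) * L l) $ N"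
    using A' by simp
  also have "\<dots> = (fps_X * (fps_X ^ (2*l-1) * L l)) $ (N+1)" by simp
  also have "fps_X * (fps_X ^ (2*l-1) * L l) = fps_X ^ (2*l) * R l"
  proof -
    have "fps_X * fps_X ^ (2*l-1) = (fps_X ^ (2*l) :: nat fps)"
      using assms by (metis Suc_diff_1 mult_pos_pos pos2 less_le_trans zero_less_one power_Suc)
    then show ?thesis by (metis L_eq_R mult.assoc)
  qed
  also have "(fps_X ^ (2*l) * R l) $ (N+1) = card {m \<in> Dset l. sum_mset m = N + 1}"
    using B' by simp
  finally show ?thesis using A' B' by simp
qed


lemma filter_all: "(\<And>x. x \<in># M \<Longrightarrow> P x) \<Longrightarrow> filter_mset P M = M"
  by (metis filter_mset_cong0 filter_mset_True)

lemma filter_none: "(\<And>x. x \<in># M \<Longrightarrow> \<not> P x) \<Longrightarrow> filter_mset P M = {#}"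
  by (simp add: filter_mset_eq_mempty_iff)

lemma mem_le_sum: "(x::nat) \<in># M \<Longrightarrow> x \<le> sum_mset M"
  by (metis le_add1 multi_member_split sum_mset.add_mset)

lemma GH_exists:
  assumes "1 \<le> l"
  shows "\<exists>g h. (\<forall>a\<in>Oset l. g a \<in> Dset l \<and> h (g a) = a \<and> sum_mset (g a) = sum_mset a + 1) \<and>
               (\<forall>d\<in>Dset l. h d \<in> Oset l \<and> g (h d) = d)"
proof -
  define OS where "OS N = {m \<in> Oset l. sum_mset m = N}" for N
  define DS where "DS N = {m \<in> Dset l. sum_mset m = N + 1}" for N
  have "\<forall>N. \<exists>f. bij_betw f (OS N) (DS N)"
    using card_core[OF assms] finite_same_card_bij unfolding OS_def DS_def by blast
  then obtain f where f: "\<And>N. bij_betw (f N) (OS N) (DS N)" by metis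
  define g where "g a = f (sum_mset a) a" for a
  define h where "h d = inv_into (OS (sum_mset d - 1)) (f (sum_mset d - 1)) d" for d
  have A: "g a \<in> Dset l \<and> h (g a) = a \<and> sum_mset (g a) = sum_mset a + 1" if a: "a \<in> Oset l" for a
  proof -
    have oo: "a \<in> OS (sum_mset a)" using a by (simp add: OS_def)
    then have go: "g a \<in> DS (sum_mset a)" using f[of "sum_mset a"] unfolding g_def
      by (meson bij_betwE)
    then have s: "sum_mset (g a) = sum_mset a + 1" by (simp add: DS_def)
    have "h (g a) = inv_into (OS (sum_mset a)) (f (sum_mset a)) (f (sum_mset a) a)"
      by (simp only: h_def s) (simp add: g_def)
    also have "\<dots> = a" using oo f[of "sum_mset a"] by (simp add: bij_betw_imp_inj_on inv_into_f_f)
    finally show ?thesis using go s by (simp add: DS_def)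
  qed
  have B: "h d \<in> Oset l \<and> g (h d) = d" if d: "d \<in> Dset l" for d
  proof -
    have "2*l \<in># d" using d by (simp add: Dset_def)
    then have "2*l \<le> sum_mset d" by (rule mem_le_sum)
    then have s1: "sum_mset d = (sum_mset d - 1) + 1" using assms by simp
    define N where "N = sum_mset d - 1"
    have dN: "d \<in> DS N" using d s1 by (simp add: DS_def N_def)
    then have "d \<in> f N ` OS N" using f[of N] by (simp add: bij_betw_def)
    have hN: "h d = inv_into (OS N) (f N) d" by (simp add: h_def N_def)
    have hd: "h d \<in> OS N" unfolding hN by (rule inv_into_into) fact
    have fhd: "f N (h d) = d" unfolding hN by (rule f_inv_into_f) fact
    have "g (h d) = d" using hd fhd by (simp add: g_def OS_def)
    then show ?thesis using hd by (simp add: OS_def)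
  qed
  show ?thesis using A B by blast
qed


definition lB :: "nat multiset \<Rightarrow> nat" where
  "lB m = (Max {x \<in> set_mset m. odd x} + 1) div 2"

definition eprop :: "nat \<Rightarrow> nat \<Rightarrow> nat multiset \<Rightarrow> bool" where
  "eprop l k e = (\<forall>y\<in>#e. even y \<and> count e y = 1 \<and> 2*l + 2 \<le> y \<and> y \<le> 2*l + 2*k - 2)"

lemma B_facts:
  assumes m: "m \<in> B_set k r n"
  shows "1 \<le> lB m \<and> filter_mset odd m \<in> Oset (lB m) \<and> eprop (lB m) k (filter_mset even m) \<and>
         sum_mset (filter_mset odd m) + sum_mset (filter_mset even m) = n \<and>
         size (filter_mset even m) \<le> k - 1 \<and> size (filter_mset even m) mod 2 = r \<and>
         m = filter_mset odd m + filter_mset even m"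
proof -
  define S where "S = {x \<in> set_mset m. odd x}"
  define l where "l = lB m"
  have finS: "finite S" by (simp add: S_def)
  have neS: "S \<noteq> {}" using m by (auto simp: B_set_def S_def)
  define M where "M = Max S"
  have MS: "M \<in> S" using finS neS by (simp add: M_def)
  have Mle: "x \<le> M" if "x \<in> S" for x using finS that by (simp add: M_def)
  have oM: "odd M" using MS by (simp add: S_def)
  have lM: "l = (M + 1) div 2" by (simp add: l_def lB_def M_def S_def)
  obtain q where q: "M = 2*q + 1" using oM oddE by blast
  have M2: "M = 2*l - 1" using q lM by simp
  have l1: "1 \<le> l" using q lM by simp
  have mM: "M \<in># m" using MS by (simp add: S_def)
  have part: "m = filter_mset odd m + filter_mset even m"
    using multiset_partition[of m odd] by (simp add: add.commute)
  have Oo: "filter_mset odd m \<in> Oset l"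
  proof -
    have "odd x \<and> x < 2*l" if "x \<in># filter_mset odd m" for x
    proof -
      have "x \<in> S" using that by (simp add: S_def)
      then have "x \<le> M" by (rule Mle)
      then show ?thesis using that M2 l1 by auto
    qed
    moreover have "2*l - 1 \<in># filter_mset odd m" using mM oM M2 by simp
    ultimately show ?thesis by (simp add: Oset_def)
  qed
  have Bc: "\<forall>y\<in>#m. even y \<longrightarrow> count m y = 1 \<and> 2*l + 2 \<le> y \<and> y \<le> 2*l + 2*k - 2"
    using m unfolding B_set_def Let_def l_def lB_def by blast
  have E: "eprop l k (filter_mset even m)"
    unfolding eprop_def using Bc by auto
  have sz: "size (filter_mset even m) \<le> k - 1" "size (filter_mset even m) mod 2 = r"
    using m by (simp_all add: B_set_def)
  have sm: "sum_mset m = n" using m by (simp add: B_set_def partitions_def)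
  then have "sum_mset (filter_mset odd m) + sum_mset (filter_mset even m) = n"
    using part by (metis sum_mset.union)
  then show ?thesis using l1 Oo E sz part by (simp add: l_def)
qed

lemma build_B:
  assumes l1: "1 \<le> l" and o: "a \<in> Oset l" and E: "eprop l k e"
    and sz: "size e \<le> k - 1" "size e mod 2 = r" and s: "sum_mset a + sum_mset e = n"
  shows "a + e \<in> B_set k r n \<and> lB (a + e) = l \<and> filter_mset odd (a + e) = a \<and> filter_mset even (a + e) = e"
proof -
  have oa: "odd x \<and> x < 2*l" if "x \<in># a" for x using o that by (simp add: Oset_def)
  have ee: "even y \<and> count e y = 1 \<and> 2*l + 2 \<le> y \<and> y \<le> 2*l + 2*k - 2" if "y \<in># e" for y
    using E that by (simp add: eprop_def)
  have m1: "2*l - 1 \<in># a" using o by (simp add: Oset_def)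
  have "filter_mset odd a = a" by (rule filter_all) (use oa in blast)
  moreover have "filter_mset odd e = {#}" by (rule filter_none) (use ee in blast)
  ultimately have fo: "filter_mset odd (a + e) = a" by simp
  have "filter_mset even a = {#}" by (rule filter_none) (use oa in blast)
  moreover have "filter_mset even e = e" by (rule filter_all) (use ee in blast)
  ultimately have fe: "filter_mset even (a + e) = e" by simp
  have S: "{x \<in> set_mset (a + e). odd x} = set_mset a" using oa ee by auto
  have Mx: "Max (set_mset a) = 2*l - 1"
  proof (rule Max_eqI)
    show "finite (set_mset a)" by simp
    show "2*l - 1 \<in> set_mset a" using m1 by simp
    fix y assume "y \<in> set_mset a"
    then show "y \<le> 2*l - 1" using oa by fastforce
  qed
  have lB: "lB (a + e) = l" unfolding lB_def S Mx using l1 by simp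
  have pos: "\<forall>x\<in>#a + e. 0 < x"
  proof
    fix x assume "x \<in># a + e"
    then have "x \<in># a \<or> x \<in># e" by simp
    then show "0 < x"
    proof
      assume "x \<in># a" then show ?thesis using oa[of x] by (simp add: odd_pos)
    next
      assume "x \<in># e" then show ?thesis using ee[of x] by simp
    qed
  qed
  have "a + e \<in> partitions n" using pos s by (simp add: partitions_def)
  moreover have "\<exists>x\<in>#a + e. odd x" using m1 oa by auto
  moreover have "\<forall>y\<in>#a + e. even y \<longrightarrow> count (a + e) y = 1 \<and> 2*l + 2 \<le> y \<and> y \<le> 2*l + 2*k - 2"
  proof (intro ballI impI)
    fix y assume y: "y \<in># a + e" "even y"
    then have "y \<notin># a" using oa by blast
    then have ye: "y \<in># e" using y by simp
    have "count a y = 0" using \<open>y \<notin># a\<close> by (simp add: not_in_iff)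
    then show "count (a + e) y = 1 \<and> 2*l + 2 \<le> y \<and> y \<le> 2*l + 2*k - 2" using ee[OF ye] by simp
  qed
  ultimately have "a + e \<in> B_set k r n"
    unfolding B_set_def Let_def using lB sz fe by (simp add: lB_def)
  then show ?thesis using lB fo fe by simp
qed

lemma C_facts:
  assumes m: "(m, l) \<in> C_set k r N"
  shows "1 \<le> l \<and> filter_mset (\<lambda>y. y \<le> 2*l) m \<in> Dset l \<and> eprop l k (filter_mset (\<lambda>y. 2*l < y) m) \<and>
         sum_mset (filter_mset (\<lambda>y. y \<le> 2*l) m) + sum_mset (filter_mset (\<lambda>y. 2*l < y) m) = N \<and>
         size (filter_mset (\<lambda>y. 2*l < y) m) \<le> k - 1 \<and> size (filter_mset (\<lambda>y. 2*l < y) m) mod 2 = r \<and>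
         m = filter_mset (\<lambda>y. y \<le> 2*l) m + filter_mset (\<lambda>y. 2*l < y) m"
proof -
  note C = m[unfolded C_set_def, simplified]
  have l1: "1 \<le> l" using C by simp
  have pos: "\<forall>x\<in>#m. 0 < x" and sm: "sum_mset m = N" using C by (simp_all add: partitions_def)
  have l2: "2*l \<in># m" using C by simp
  have small: "\<forall>y\<in>#m. y \<le> l \<longrightarrow> count m y = 1" using C by simp
  have big: "\<forall>y\<in>#m. 2*l < y \<longrightarrow> even y \<and> count m y = 1 \<and> 2*l + 2 \<le> y \<and> y \<le> 2*l + 2*k - 2"
    using C by simp
  have sz: "size (filter_mset (\<lambda>y. 2*l < y) m) \<le> k - 1" "size (filter_mset (\<lambda>y. 2*l < y) m) mod 2 = r"
    using C by simp_all
  have part: "m = filter_mset (\<lambda>y. y \<le> 2*l) m + filter_mset (\<lambda>y. 2*l < y) m"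
    using multiset_partition[of m "\<lambda>y. y \<le> 2*l"] by (simp add: not_le)
  have D: "filter_mset (\<lambda>y. y \<le> 2*l) m \<in> Dset l"
    unfolding Dset_def using pos l2 small by auto
  have E: "eprop l k (filter_mset (\<lambda>y. 2*l < y) m)"
    unfolding eprop_def using big by auto
  have "sum_mset (filter_mset (\<lambda>y. y \<le> 2*l) m) + sum_mset (filter_mset (\<lambda>y. 2*l < y) m) = N"
    using part sm by (metis sum_mset.union)
  then show ?thesis using l1 D E sz part by simp
qed

lemma build_C:
  assumes l1: "1 \<le> l" and d: "d \<in> Dset l" and E: "eprop l k e"
    and sz: "size e \<le> k - 1" "size e mod 2 = r" and s: "sum_mset d + sum_mset e = N"
  shows "(d + e, l) \<in> C_set k r N \<and> filter_mset (\<lambda>y. y \<le> 2*l) (d + e) = d \<and>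
         filter_mset (\<lambda>y. 2*l < y) (d + e) = e"
proof -
  have dd: "0 < x \<and> x \<le> 2*l" if "x \<in># d" for x using d that by (simp add: Dset_def)
  have ee: "even y \<and> count e y = 1 \<and> 2*l + 2 \<le> y \<and> y \<le> 2*l + 2*k - 2" if "y \<in># e" for y
    using E that by (simp add: eprop_def)
  have "filter_mset (\<lambda>y. y \<le> 2*l) d = d" by (rule filter_all) (use dd in blast)
  moreover have "filter_mset (\<lambda>y. y \<le> 2*l) e = {#}" by (rule filter_none) (use ee in fastforce)
  ultimately have f1: "filter_mset (\<lambda>y. y \<le> 2*l) (d + e) = d" by simp
  have "filter_mset (\<lambda>y. 2*l < y) d = {#}" by (rule filter_none) (use dd in fastforce)
  moreover have "filter_mset (\<lambda>y. 2*l < y) e = e" by (rule filter_all) (use ee in fastforce)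
  ultimately have f2: "filter_mset (\<lambda>y. 2*l < y) (d + e) = e" by simp
  have pos: "\<forall>x\<in>#d + e. 0 < x"
  proof
    fix x assume "x \<in># d + e"
    then show "0 < x" using dd ee by fastforce
  qed
  have "d + e \<in> partitions N" using pos s by (simp add: partitions_def)
  moreover have "2*l \<in># d + e" using d by (simp add: Dset_def)
  moreover have "\<forall>y\<in>#d + e. y \<le> l \<longrightarrow> count (d + e) y = 1"
  proof (intro ballI impI)
    fix y assume y: "y \<in># d + e" "y \<le> l"
    then have "y \<notin># e" using ee by fastforce
    have "y \<in># d" using y \<open>y \<notin># e\<close> by simp
    have "count e y = 0" using \<open>y \<notin># e\<close> by (simp add: not_in_iff)
    then show "count (d + e) y = 1" using d y \<open>y \<in># d\<close> by (simp add: Dset_def)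
  qed
  moreover have "\<forall>y\<in>#d + e. 2*l < y \<longrightarrow> even y \<and> count (d + e) y = 1 \<and> 2*l + 2 \<le> y \<and> y \<le> 2*l + 2*k - 2"
  proof (intro ballI impI)
    fix y assume y: "y \<in># d + e" "2*l < y"
    then have "y \<notin># d" using dd by fastforce
    have "y \<in># e" using y \<open>y \<notin># d\<close> by simp
    have "count d y = 0" using \<open>y \<notin># d\<close> by (simp add: not_in_iff)
    then show "even y \<and> count (d + e) y = 1 \<and> 2*l + 2 \<le> y \<and> y \<le> 2*l + 2*k - 2" using ee[OF \<open>y \<in># e\<close>] by simp
  qed
  ultimately have "(d + e, l) \<in> C_set k r N"
    unfolding C_set_def mem_Collect_eq prod.case f2 using l1 sz by blast
  then show ?thesis using f1 f2 by simp
qed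


lemma card_eq: "card (B_set k r n) = card (C_set k r (n+1))"
proof -
  have "\<forall>l. \<exists>g h. 1 \<le> l \<longrightarrow> ((\<forall>a\<in>Oset l. g a \<in> Dset l \<and> h (g a) = a \<and> sum_mset (g a) = sum_mset a + 1) \<and>
               (\<forall>d\<in>Dset l. h d \<in> Oset l \<and> g (h d) = d))"
    using GH_exists by blast
  then obtain Gf Hf where GH: "\<And>l. 1 \<le> l \<Longrightarrow> (\<forall>a\<in>Oset l. Gf l a \<in> Dset l \<and> Hf l (Gf l a) = a \<and> sum_mset (Gf l a) = sum_mset a + 1) \<and>
               (\<forall>d\<in>Dset l. Hf l d \<in> Oset l \<and> Gf l (Hf l d) = d)"
    by metis
  define Phi where "Phi m = (Gf (lB m) (filter_mset odd m) + filter_mset even m, lB m)" for m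
  define Psi where "Psi = (\<lambda>(m', l). Hf l (filter_mset (\<lambda>y. y \<le> 2*l) m') + filter_mset (\<lambda>y. 2*l < y) m')"
  have fwd: "Phi m \<in> C_set k r (n+1) \<and> Psi (Phi m) = m" if m: "m \<in> B_set k r n" for m
  proof -
    define l where "l = lB m"
    define a where "a = filter_mset odd m"
    define e where "e = filter_mset even m"
    note F = B_facts[OF m, folded l_def a_def e_def]
    have l1: "1 \<le> l" and aO: "a \<in> Oset l" and E: "eprop l k e" and s: "sum_mset a + sum_mset e = n"
      and sz: "size e \<le> k - 1" "size e mod 2 = r" and me: "m = a + e" using F by auto
    have g: "Gf l a \<in> Dset l" "Hf l (Gf l a) = a" "sum_mset (Gf l a) = sum_mset a + 1"
      using GH[OF l1] aO by auto
    have s2: "sum_mset (Gf l a) + sum_mset e = n + 1" using s g(3) by simp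
    note C = build_C[OF l1 g(1) E sz s2]
    have P: "Phi m = (Gf l a + e, l)" by (simp add: Phi_def l_def a_def e_def)
    have "Psi (Phi m) = Hf l (Gf l a) + e" using C by (simp add: P Psi_def)
    then have "Psi (Phi m) = m" using g(2) me by simp
    then show ?thesis using C P by simp
  qed
  have bwd: "Psi c \<in> B_set k r n \<and> Phi (Psi c) = c" if c: "c \<in> C_set k r (n+1)" for c
  proof -
    obtain m' l where cm: "c = (m', l)" by fastforce
    define d where "d = filter_mset (\<lambda>y. y \<le> 2*l) m'"
    define e where "e = filter_mset (\<lambda>y. 2*l < y) m'"
    note F = C_facts[OF c[unfolded cm], folded d_def e_def]
    have l1: "1 \<le> l" and dD: "d \<in> Dset l" and E: "eprop l k e" and s: "sum_mset d + sum_mset e = n + 1"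
      and sz: "size e \<le> k - 1" "size e mod 2 = r" and me: "m' = d + e" using F by auto
    have h: "Hf l d \<in> Oset l" "Gf l (Hf l d) = d" using GH[OF l1] dD by auto
    have "sum_mset (Gf l (Hf l d)) = sum_mset (Hf l d) + 1" using GH[OF l1] h(1) by auto
    then have s2: "sum_mset (Hf l d) + sum_mset e = n" using s h(2) by simp
    note B = build_B[OF l1 h(1) E sz s2]
    have P: "Psi c = Hf l d + e" by (simp add: Psi_def cm d_def e_def)
    have "Phi (Psi c) = (Gf l (Hf l d) + e, l)" using B by (simp add: P Phi_def)
    then have "Phi (Psi c) = c" using h(2) me cm by simp
    then show ?thesis using B P by simp
  qed
  have "bij_betw Phi (B_set k r n) (C_set k r (n+1))"
    by (rule bij_betw_byWitness[where f'=Psi]) (use fwd bwd in auto)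
  then show ?thesis by (rule bij_betw_same_card)
qed

theorem theorem2:
  fixes n k :: nat
  assumes "1 \<le> n" and "1 \<le> k"
  shows "B_e k n = C_e k (n + 1) \<and> B_o k n = C_o k (n + 1)"
  by (simp add: B_e_def C_e_def B_o_def C_o_def card_eq)


end
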